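(* Let $\tau>1$, let $\kappa\ge3$ be an integer and let $x^\dagger\in\mathcal X$ satisfy $\bar k^\delta_{\mathrm{pr}}(x^\dagger)\ge\kappa$. Then on the event $\Omega_\kappa$, writing $k^\delta_{\mathrm{pr}}=k^\delta_{\mathrm{pr}}(x^\dagger)$, $$\sum_{j=k^\delta_{\mathrm{dp}}+1}^{k^\delta_{\mathrm{pr}}}(y^\dagger,u_j)^2\le\frac{(3\tau+1)^2}{4}\,k^\delta_{\mathrm{pr}}\,\delta^2,$$ where the sum is $0$ if $k^\delta_{\mathrm{dp}}\ge k^\delta_{\mathrm{pr}}$.
   Context: Setting: $K:\mathcal X\to\mathcal Y$ compact injective with dense range between infinite-dimensional real separable Hilbert spaces, singular system $(\sigma_j,v_j,u_j)$ ($(v_j),(u_j)$ orthonormal bases, $\sigma_1\ge\sigma_2\ge\dots>0$, $Kv_j=\sigma_ju_j$, $K^*u_j=\sigma_jv_j$); $y^\dagger=Kx^\dagger$, $\delta>0$, data $(y^\delta,u_j):=(y^\dagger,u_j)+\delta(Z,u_j)$ with real random variables $(Z,u_j)$. For $m\in\mathbb N$: $k^\delta_{\mathrm{dp}}(m):=\min\{k\in\{0,\dots,m\}:\sqrt{\sum_{j=k+1}^m(y^\delta,u_j)^2}\le\tau\sqrt m\,\delta\}$, $k^\delta_{\mathrm{dp}}:=\sup_{m\in\mathbb N}k^\delta_{\mathrm{dp}}(m)$. With $\min\emptyset=\infty$: $k^\delta_{\mathrm{pr}}(x^\dagger):=\min\{k\in\mathbb N_0:\sum_{j=1}^k(y^\delta-y^\dagger,u_j)^2\ge\sum_{j=k+1}^\infty(y^\dagger,u_j)^2\}$,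 $\bar k^\delta_{\mathrm{pr}}(x^\dagger):=\min\{k\in\mathbb N_0:\delta^2k\ge\sum_{j=k+1}^\infty(y^\dagger,u_j)^2\}$. With $\varepsilon_\tau:=\min\big(\frac{(\tau+1)^2}{4}-1,\frac13\big)$, $$\Omega_\kappa:=\Big\{\Big|\sum_{j=1}^m(y^\delta-y^\dagger,u_j)^2-m\delta^2\Big|\le\varepsilon_\tau m\delta^2\ \text{for all integers } m\ge\kappa/3\Big\}.$$ *)

theory Defs
  imports "HOL-Analysis.Analysis" "HOL-Library.Extended_Nat"
begin

text \<open>Coefficient sequences are indexed by j = 1, 2, ...; the value at index 0 is never used.
  yd j stands for the data coefficient (y^delta, u_j), c j for (y^dagger, u_j).\<close>

definition compact_op :: "('a::real_normed_vector \<Rightarrow> 'b::real_normed_vector) \<Rightarrow> bool" where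
  "compact_op K \<longleftrightarrow> bounded_linear K \<and> (\<forall>S. bounded S \<longrightarrow> compact (closure (K ` S)))"

definition k_dp_m :: "real \<Rightarrow> real \<Rightarrow> (nat \<Rightarrow> real) \<Rightarrow> nat \<Rightarrow> nat" where
  "k_dp_m \<tau> \<delta> yd m =
     (LEAST k. k \<le> m \<and> sqrt (\<Sum>j\<in>{k+1..m}. (yd j)\<^sup>2) \<le> \<tau> * sqrt (real m) * \<delta>)"

definition k_dp :: "real \<Rightarrow> real \<Rightarrow> (nat \<Rightarrow> real) \<Rightarrow> enat" where
  "k_dp \<tau> \<delta> yd = (SUP m\<in>{1..}. enat (k_dp_m \<tau> \<delta> yd m))"

definition tail_sq :: "(nat \<Rightarrow> real) \<Rightarrow> nat \<Rightarrow> real" where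
  "tail_sq c k = (\<Sum>i. (c (i + k + 1))\<^sup>2)"

definition min_inf :: "(nat \<Rightarrow> bool) \<Rightarrow> enat" where
  "min_inf P = (if \<exists>k. P k then enat (LEAST k. P k) else \<infinity>)"

definition k_pr :: "(nat \<Rightarrow> real) \<Rightarrow> (nat \<Rightarrow> real) \<Rightarrow> enat" where
  "k_pr yd c = min_inf (\<lambda>k. (\<Sum>j\<in>{1..k}. (yd j - c j)\<^sup>2) \<ge> tail_sq c k)"

definition k_pr_bar :: "real \<Rightarrow> (nat \<Rightarrow> real) \<Rightarrow> enat" where
  "k_pr_bar \<delta> c = min_inf (\<lambda>k. \<delta>\<^sup>2 * real k \<ge> tail_sq c k)"

definition eps_tau :: "real \<Rightarrow> real" where
  "eps_tau \<tau> = min ((\<tau> + 1)\<^sup>2 / 4 - 1) (1/3)"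

definition Omega :: "real \<Rightarrow> real \<Rightarrow> nat \<Rightarrow> (nat \<Rightarrow> real) \<Rightarrow> (nat \<Rightarrow> real) \<Rightarrow> bool" where
  "Omega \<tau> \<delta> \<kappa> yd c \<longleftrightarrow>
     (\<forall>m::nat. real m \<ge> real \<kappa> / 3 \<longrightarrow>
        \<bar>(\<Sum>j\<in>{1..m}. (yd j - c j)\<^sup>2) - real m * \<delta>\<^sup>2\<bar> \<le> eps_tau \<tau> * real m * \<delta>\<^sup>2)"

end

theory Submission
  imports Defs
begin

lemma tail_facts:
  fixes c :: "nat \<Rightarrow> real"
  assumes sm: "summable (\<lambda>j. (c (Suc j))\<^sup>2)"
  shows "\<And>k. tail_sq c (Suc k) = tail_sq c k - (c (Suc k))\<^sup>2"
    and "\<And>k k'. k \<le> k' \<Longrightarrow> tail_sq c k' \<le> tail_sq c k"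
    and "\<And>r. r > 0 \<Longrightarrow> \<exists>N. \<forall>n\<ge>N. tail_sq c n < r"
proof -
  define f where "f i = (c (Suc i))\<^sup>2" for i
  have sf: "summable f" using sm unfolding f_def by simp
  have t: "tail_sq c k = (\<Sum>i. f (i + k))" for k
    unfolding tail_sq_def f_def by simp
  show s: "tail_sq c (Suc k) = tail_sq c k - (c (Suc k))\<^sup>2" for k
  proof -
    have "summable (\<lambda>i. f (i + k))" using sf by simp
    from suminf_split_head[OF this] show ?thesis by (simp add: t f_def)
  qed
  have "decseq (tail_sq c)"
    by (rule decseq_SucI) (simp add: s)
  then show "\<And>k k'. k \<le> k' \<Longrightarrow> tail_sq c k' \<le> tail_sq c k"
    by (simp add: decseq_def)
  show "\<exists>N. \<forall>n\<ge>N. tail_sq c n < r" if "r > 0" for r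
    using suminf_exist_split[OF that sf] unfolding t by (metis abs_less_iff real_norm_def)
qed

lemma main_generic:
  fixes c e :: "nat \<Rightarrow> real" and \<delta> \<tau> :: real and \<kappa> :: nat
  assumes sm: "summable (\<lambda>j. (c (Suc j))\<^sup>2)"
    and \<delta>_pos: "\<delta> > 0"
    and \<tau>_gt: "\<tau> > 1"
    and \<kappa>_ge: "\<kappa> \<ge> 3"
    and kbar: "k_pr_bar \<delta> c \<ge> enat \<kappa>"
    and event: "Omega \<tau> \<delta> \<kappa> (\<lambda>j. c j + e j) c"
  shows "\<exists>kpr::nat.
           k_pr (\<lambda>j. c j + e j) c = enat kpr \<and>
           (\<Sum>j\<in>{j. k_dp \<tau> \<delta> (\<lambda>j. c j + e j) < enat j \<and> j \<le> kpr}.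
               (c j)\<^sup>2)
             \<le> (3 * \<tau> + 1)\<^sup>2 / 4 * real kpr * \<delta>\<^sup>2"
proof -
  define yd where "yd j = c j + e j" for j
  define \<epsilon> where "\<epsilon> = eps_tau \<tau>"
  note tf = tail_facts[OF sm]
  have eps1: "\<epsilon> \<le> 1/3" and eps2: "\<epsilon> \<le> (\<tau> + 1)\<^sup>2 / 4 - 1"
    unfolding \<epsilon>_def eps_tau_def by (auto simp: min_def)
  have d2: "\<delta>\<^sup>2 > 0" using \<delta>_pos by simp
  have om: "\<bar>(\<Sum>j\<in>{1..m}. (e j)\<^sup>2) - real m * \<delta>\<^sup>2\<bar> \<le> \<epsilon> * real m * \<delta>\<^sup>2"
    if "real m \<ge> real \<kappa> / 3" for m
    using event that unfolding Omega_def \<epsilon>_def by auto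
  have omU: "(\<Sum>j\<in>{1..m}. (e j)\<^sup>2) \<le> (1 + \<epsilon>) * real m * \<delta>\<^sup>2"
    if "real m \<ge> real \<kappa> / 3" for m
    using om[OF that] by (simp add: algebra_simps abs_le_iff)
  have omL: "(\<Sum>j\<in>{1..m}. (e j)\<^sup>2) \<ge> (1 - \<epsilon>) * real m * \<delta>\<^sup>2"
    if "real m \<ge> real \<kappa> / 3" for m
    using om[OF that] by (simp add: algebra_simps abs_le_iff)
  have kb: "\<not> (\<delta>\<^sup>2 * real k \<ge> tail_sq c k)" if "k < \<kappa>" for k
  proof
    assume P: "\<delta>\<^sup>2 * real k \<ge> tail_sq c k"
    then have "k_pr_bar \<delta> c = enat (LEAST k. \<delta>\<^sup>2 * real k \<ge> tail_sq c k)"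
      unfolding k_pr_bar_def min_inf_def by auto
    with kbar have "\<kappa> \<le> (LEAST k. \<delta>\<^sup>2 * real k \<ge> tail_sq c k)" by simp
    moreover have "(LEAST k. \<delta>\<^sup>2 * real k \<ge> tail_sq c k) \<le> k" using P by (rule Least_le)
    ultimately show False using that by simp
  qed
  define P where "P k \<longleftrightarrow> (\<Sum>j\<in>{1..k}. (yd j - c j)\<^sup>2) \<ge> tail_sq c k" for k
  have Pe: "P k \<longleftrightarrow> (\<Sum>j\<in>{1..k}. (e j)\<^sup>2) \<ge> tail_sq c k" for k
    unfolding P_def yd_def by simp
  obtain N where N: "\<forall>n\<ge>N. tail_sq c n < \<delta>\<^sup>2 / 2"
    using tf(3)[of "\<delta>\<^sup>2 / 2"] d2 by auto
  define k0 where "k0 = max N \<kappa>"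
  have "P k0"
  proof -
    have k0k: "real k0 \<ge> real \<kappa> / 3" "k0 \<ge> 3" using \<kappa>_ge by (auto simp: k0_def)
    have "tail_sq c k0 < \<delta>\<^sup>2 / 2" using N by (simp add: k0_def)
    also have "\<delta>\<^sup>2 / 2 \<le> (1 - \<epsilon>) * real k0 * \<delta>\<^sup>2"
    proof -
      have "1/2 \<le> (1 - \<epsilon>) * real k0" using eps1 k0k(2)
      proof -
        have "(1 - \<epsilon>) \<ge> 2/3" using eps1 by simp
        moreover have "real k0 \<ge> 3" using k0k(2) by simp
        ultimately have "(1 - \<epsilon>) * real k0 \<ge> 2/3 * 3"
          by (intro mult_mono) auto
        then show ?thesis by simp
      qed
      then show ?thesis using d2 by (simp add: mult_right_mono[of "1/2" _ "\<delta>\<^sup>2", simplified])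
    qed
    also have "\<dots> \<le> (\<Sum>j\<in>{1..k0}. (e j)\<^sup>2)" using omL[OF k0k(1)] .
    finally show ?thesis unfolding Pe by simp
  qed
  define kpr where "kpr = (LEAST k. P k)"
  have kprP: "P kpr" unfolding kpr_def using \<open>P k0\<close> by (rule LeastI)
  have kpr_eq: "k_pr (\<lambda>j. c j + e j) c = enat kpr"
    unfolding k_pr_def min_inf_def kpr_def P_def yd_def using \<open>P k0\<close>
    unfolding P_def yd_def by auto
  have kpr_big: "real kpr \<ge> real \<kappa> / 3"
  proof (rule ccontr)
    assume "\<not> ?thesis"
    then have lt: "3 * kpr < \<kappa>" by linarith
    define m0 where "m0 = (\<kappa> + 2) div 3"
    have m0a: "3 * m0 \<ge> \<kappa>" unfolding m0_def by presburger
    have m0b: "4 * m0 \<le> 3 * (\<kappa> - 1)" unfolding m0_def using \<kappa>_ge by presburger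
    have m0k: "real m0 \<ge> real \<kappa> / 3" using m0a by linarith
    have "kpr \<le> m0" using lt m0a by linarith
    have "\<delta>\<^sup>2 * real (\<kappa> - 1) < tail_sq c (\<kappa> - 1)"
      using kb[of "\<kappa> - 1"] \<kappa>_ge by simp
    also have "\<dots> \<le> tail_sq c kpr" using tf(2) lt by simp
    also have "\<dots> \<le> (\<Sum>j\<in>{1..kpr}. (e j)\<^sup>2)" using kprP Pe by simp
    also have "\<dots> \<le> (\<Sum>j\<in>{1..m0}. (e j)\<^sup>2)"
      by (rule sum_mono2) (use \<open>kpr \<le> m0\<close> in auto)
    also have "\<dots> \<le> (1 + \<epsilon>) * real m0 * \<delta>\<^sup>2" using omU[OF m0k] .
    also have "\<dots> \<le> (4/3) * real m0 * \<delta>\<^sup>2"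
      using eps1 d2 by (intro mult_right_mono) auto
    also have "\<dots> \<le> \<delta>\<^sup>2 * real (\<kappa> - 1)"
    proof -
      have "(4/3) * real m0 \<le> real (\<kappa> - 1)" using m0b by linarith
      then show ?thesis using d2 by (simp add: mult.commute mult_left_mono)
    qed
    finally show False by simp
  qed
  have kpr1: "kpr \<ge> 1" using kpr_big \<kappa>_ge by (cases kpr) auto
  define m where "m = kpr"
  define k' where "k' = k_dp_m \<tau> \<delta> yd m"
  have ex: "m \<le> m \<and> sqrt (\<Sum>j\<in>{m+1..m}. (yd j)\<^sup>2) \<le> \<tau> * sqrt (real m) * \<delta>"
    using \<tau>_gt \<delta>_pos by simp
  have k'P: "k' \<le> m \<and> sqrt (\<Sum>j\<in>{k'+1..m}. (yd j)\<^sup>2) \<le> \<tau> * sqrt (real m) * \<delta>"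
    unfolding k'_def k_dp_m_def by (rule LeastI[of _ m], rule ex)
  have k'D: "enat k' \<le> k_dp \<tau> \<delta> yd"
    unfolding k_dp_def k'_def using kpr1 m_def by (intro SUP_upper) auto
  define A where "A = {k'+1..m}"
  have sub: "{j. k_dp \<tau> \<delta> yd < enat j \<and> j \<le> kpr} \<subseteq> A"
  proof
    fix j assume "j \<in> {j. k_dp \<tau> \<delta> yd < enat j \<and> j \<le> kpr}"
    then have "enat k' < enat j" "j \<le> kpr" using k'D by (auto dest: le_less_trans)
    then show "j \<in> A" unfolding A_def m_def by auto
  qed
  have s1: "(\<Sum>j\<in>{j. k_dp \<tau> \<delta> yd < enat j \<and> j \<le> kpr}. (c j)\<^sup>2) \<le> (\<Sum>j\<in>A. (c j)\<^sup>2)"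
    by (rule sum_mono2) (use sub in \<open>auto simp: A_def\<close>)
  have "L2_set c A = L2_set (\<lambda>j. yd j + (- e j)) A"
    by (rule L2_set_cong) (auto simp: yd_def)
  also have "\<dots> \<le> L2_set yd A + L2_set (\<lambda>j. - e j) A" by (rule L2_set_triangle_ineq)
  also have "L2_set yd A \<le> \<tau> * sqrt (real m) * \<delta>" using k'P by (simp add: L2_set_def A_def)
  also have "L2_set (\<lambda>j. - e j) A \<le> (\<tau> + 1) / 2 * sqrt (real m) * \<delta>"
  proof -
    have "L2_set (\<lambda>j. - e j) A = sqrt (\<Sum>j\<in>A. (e j)\<^sup>2)" by (simp add: L2_set_def)
    also have "\<dots> \<le> sqrt (\<Sum>j\<in>{1..m}. (e j)\<^sup>2)"
      by (rule real_sqrt_le_mono, rule sum_mono2) (auto simp: A_def)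
    also have "\<dots> \<le> sqrt ((1 + \<epsilon>) * real m * \<delta>\<^sup>2)"
      using omU[of m] kpr_big m_def by simp
    also have "\<dots> \<le> sqrt (((\<tau> + 1) / 2)\<^sup>2 * real m * \<delta>\<^sup>2)"
    proof (rule real_sqrt_le_mono)
      have "1 + \<epsilon> \<le> ((\<tau> + 1) / 2)\<^sup>2" using eps2 by (simp add: power_divide)
      then show "(1 + \<epsilon>) * real m * \<delta>\<^sup>2 \<le> ((\<tau> + 1) / 2)\<^sup>2 * real m * \<delta>\<^sup>2"
        using d2 by (intro mult_right_mono) auto
    qed
    also have "\<dots> = (\<tau> + 1) / 2 * sqrt (real m) * \<delta>"
      using \<tau>_gt \<delta>_pos by (simp add: real_sqrt_mult)
    finally show ?thesis .
  qed
  finally have L: "L2_set c A \<le> (3 * \<tau> + 1) / 2 * sqrt (real m) * \<delta>"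
    by (simp add: field_simps)
  have "(\<Sum>j\<in>A. (c j)\<^sup>2) = (L2_set c A)\<^sup>2"
    by (simp add: L2_set_def sum_nonneg)
  also have "\<dots> \<le> ((3 * \<tau> + 1) / 2 * sqrt (real m) * \<delta>)\<^sup>2"
    by (rule power_mono[OF L]) simp
  also have "\<dots> = (3 * \<tau> + 1)\<^sup>2 / 4 * real kpr * \<delta>\<^sup>2"
    by (simp add: power_mult_distrib power_divide m_def)
  finally show ?thesis using s1 kpr_eq unfolding yd_def by auto
qed

theorem mainTheorem12:
  fixes K :: "'x::{real_inner,complete_space} \<Rightarrow> 'y::{real_inner,complete_space}"
    and \<sigma> :: "nat \<Rightarrow> real" and v :: "nat \<Rightarrow> 'x" and u :: "nat \<Rightarrow> 'y"
    and xdag :: 'x and \<delta> \<tau> :: real and Z :: "nat \<Rightarrow> real" and \<kappa> :: nat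
  assumes K_compact: "compact_op K"
    and K_inj: "inj K"
    and K_dense: "closure (range K) = UNIV"
    and v_orth: "\<And>i j. i \<ge> 1 \<Longrightarrow> j \<ge> 1 \<Longrightarrow> v i \<bullet> v j = (if i = j then 1 else 0)"
    and u_orth: "\<And>i j. i \<ge> 1 \<Longrightarrow> j \<ge> 1 \<Longrightarrow> u i \<bullet> u j = (if i = j then 1 else 0)"
    and v_basis: "\<And>x. (\<lambda>j. (x \<bullet> v (Suc j))\<^sup>2) sums (norm x)\<^sup>2"
    and u_basis: "\<And>y. (\<lambda>j. (y \<bullet> u (Suc j))\<^sup>2) sums (norm y)\<^sup>2"
    and \<sigma>_pos: "\<And>j. j \<ge> 1 \<Longrightarrow> \<sigma> j > 0"
    and \<sigma>_mono: "\<And>j. j \<ge> 1 \<Longrightarrow> \<sigma> (Suc j) \<le> \<sigma> j"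
    and K_v: "\<And>j. j \<ge> 1 \<Longrightarrow> K (v j) = \<sigma> j *\<^sub>R u j"
    and Kadj_u: "\<And>x j. j \<ge> 1 \<Longrightarrow> K x \<bullet> u j = \<sigma> j * (x \<bullet> v j)"
    and \<delta>_pos: "\<delta> > 0"
    and \<tau>_gt: "\<tau> > 1"
    and \<kappa>_ge: "\<kappa> \<ge> 3"
    and kbar: "k_pr_bar \<delta> (\<lambda>j. K xdag \<bullet> u j) \<ge> enat \<kappa>"
    and event: "Omega \<tau> \<delta> \<kappa> (\<lambda>j. K xdag \<bullet> u j + \<delta> * Z j) (\<lambda>j. K xdag \<bullet> u j)"
  shows "\<exists>kpr::nat.
           k_pr (\<lambda>j. K xdag \<bullet> u j + \<delta> * Z j) (\<lambda>j. K xdag \<bullet> u j) = enat kpr \<and>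
           (\<Sum>j\<in>{j. k_dp \<tau> \<delta> (\<lambda>j. K xdag \<bullet> u j + \<delta> * Z j) < enat j \<and> j \<le> kpr}.
               (K xdag \<bullet> u j)\<^sup>2)
             \<le> (3 * \<tau> + 1)\<^sup>2 / 4 * real kpr * \<delta>\<^sup>2"
proof -
  have "summable (\<lambda>j. (K xdag \<bullet> u (Suc j))\<^sup>2)"
    using u_basis[of "K xdag"] by (rule sums_summable)
  from main_generic[OF this \<delta>_pos \<tau>_gt \<kappa>_ge kbar, of "\<lambda>j. \<delta> * Z j"] event
  show ?thesis by simp
qed

end
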